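(* Let $\Sigma\in\mathbb{R}^{N\times N}$ be symmetric positive definite, $\mathcal T$ a binary tree whose leaves are the assets $1,\dots,N$, and $\gamma\in[0,1]$. For all $\mu\in\mathbb{R}^N$ outside a Lebesgue-measure-zero subset of $\mathbb{R}^N$, the aggregate signal $s_n$ computed by the HRP-$\Sigma\mu$ algorithm is nonzero at every internal node $n$ of $\mathcal T$. In particular, the $L^1$ denominator $|\alpha_L^{\mathrm{raw}}|+|\alpha_R^{\mathrm{raw}}|$ is strictly positive at every internal node and the algorithm is well defined.
   Context: HRP-$\Sigma\mu$ algorithm (inputs $\Sigma,\mu,\mathcal T,\gamma$), defined recursively. At a leaf (asset $i$) return $\hat w=(1)$, $v=\Sigma_{ii}$, $s=\mu_i$. At an internal node $n$ with left and right subtrees having leaf index sets $L,R$: recursively obtain $(\hat w_L,v_L,s_L)$ and $(\hat w_R,v_R,s_R)$; set $c=\hat w_L^\top\Sigma_{LR}\hat w_R$, $\Delta=v_Lv_R-\gamma^2c^2$, $\alpha_L^{\mathrm{raw}}=(v_Rs_L-\gamma cs_R)/\Delta$, $\alpha_R^{\mathrm{raw}}=(v_Ls_R-\gamma cs_L)/\Delta$, $Z=|\alpha_L^{\mathrm{raw}}|+|\alpha_R^{\mathrm{raw}}|$, $\alpha_k=\alpha_k^{\mathrm{raw}}/Z$; the node representative is the stacked vector $\hat w_n=(\alpha_L\hat w_L,\alpha_R\hat w_R)\in\mathbb{R}^{L\cup R}$, with $v_n=\hat w_n^\top\Sigma_{nn}\hat w_n$ and $s_n=\hat w_n^\top\mu_n$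 (subscripts denote sub-blocks/subvectors on the node's index set). The output is the representative at the root. *)

theory Defs
  imports "HOL-Analysis.Analysis"
begin

datatype 'a btree = Leaf 'a | Node "'a btree" "'a btree"

fun leaves :: "'a btree \<Rightarrow> 'a list" where
  "leaves (Leaf i) = [i]"
| "leaves (Node l r) = leaves l @ leaves r"

fun subtrees :: "'a btree \<Rightarrow> 'a btree set" where
  "subtrees (Leaf i) = {Leaf i}"
| "subtrees (Node l r) = insert (Node l r) (subtrees l \<union> subtrees r)"

fun is_internal :: "'a btree \<Rightarrow> bool" where
  "is_internal (Leaf _) = False"
| "is_internal (Node _ _) = True"

definition valid_tree :: "'n btree \<Rightarrow> bool" where
  "valid_tree T \<longleftrightarrow> distinct (leaves T) \<and> set (leaves T) = (UNIV :: 'n set)"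

definition symmetric_pd :: "real^'n^'n \<Rightarrow> bool" where
  "symmetric_pd S \<longleftrightarrow> transpose S = S \<and> (\<forall>x. x \<noteq> 0 \<longrightarrow> x \<bullet> (S *v x) > 0)"

text \<open>Quadratic / bilinear forms for weight vectors given as functions on assets
  (weights vanish outside the node's leaf set, so sums over all assets equal sums
  over the relevant sub-blocks).\<close>
definition bil :: "real^'n^'n \<Rightarrow> ('n::finite \<Rightarrow> real) \<Rightarrow> ('n \<Rightarrow> real) \<Rightarrow> real" where
  "bil S a b = (\<Sum>i\<in>UNIV. \<Sum>j\<in>UNIV. a i * S $ i $ j * b j)"

definition dotv :: "('n::finite \<Rightarrow> real) \<Rightarrow> real^'n \<Rightarrow> real" where
  "dotv a m = (\<Sum>i\<in>UNIV. a i * m $ i)"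

definition raw_alphas ::
  "real^'n^'n \<Rightarrow> real \<Rightarrow> ('n::finite \<Rightarrow> real) \<times> real \<times> real \<Rightarrow> ('n \<Rightarrow> real) \<times> real \<times> real
     \<Rightarrow> real \<times> real" where
  "raw_alphas S \<gamma> resL resR =
     (case resL of (wL, vL, sL) \<Rightarrow> case resR of (wR, vR, sR) \<Rightarrow>
       (let c = bil S wL wR; \<Delta> = vL * vR - \<gamma>^2 * c^2
        in ((vR * sL - \<gamma> * c * sR) / \<Delta>, (vL * sR - \<gamma> * c * sL) / \<Delta>)))"

text \<open>HRP-Sigma-mu: returns (representative weight vector, v, s) for a (sub)tree.\<close>
fun hrp :: "real^'n^'n \<Rightarrow> real^'n \<Rightarrow> real \<Rightarrow> ('n::finite) btree \<Rightarrow> ('n \<Rightarrow> real) \<times> real \<times> real" where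
  "hrp S \<mu> \<gamma> (Leaf i) = ((\<lambda>j. if j = i then 1 else 0), S $ i $ i, \<mu> $ i)"
| "hrp S \<mu> \<gamma> (Node l r) =
     (let resL = hrp S \<mu> \<gamma> l; resR = hrp S \<mu> \<gamma> r;
          (aL, aR) = raw_alphas S \<gamma> resL resR;
          Z = \<bar>aL\<bar> + \<bar>aR\<bar>;
          w = (\<lambda>j. (aL / Z) * fst resL j + (aR / Z) * fst resR j)
      in (w, bil S w w, dotv w \<mu>))"

definition hrp_signal :: "real^'n^'n \<Rightarrow> real^'n \<Rightarrow> real \<Rightarrow> ('n::finite) btree \<Rightarrow> real" where
  "hrp_signal S \<mu> \<gamma> t = snd (snd (hrp S \<mu> \<gamma> t))"

fun hrp_denominator :: "real^'n^'n \<Rightarrow> real^'n \<Rightarrow> real \<Rightarrow> ('n::finite) btree \<Rightarrow> real" where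
  "hrp_denominator S \<mu> \<gamma> (Leaf i) = 1"
| "hrp_denominator S \<mu> \<gamma> (Node l r) =
     (case raw_alphas S \<gamma> (hrp S \<mu> \<gamma> l) (hrp S \<mu> \<gamma> r) of (aL, aR) \<Rightarrow> \<bar>aL\<bar> + \<bar>aR\<bar>)"

end

theory Submission
  imports Defs
begin

lemma bil_lin_left: "bil S (\<lambda>j. a * f j + b * g j) h = a * bil S f h + b * bil S g h"
  unfolding bil_def by (simp add: algebra_simps sum.distrib sum_distrib_left)

lemma bil_sym: "transpose S = S \<Longrightarrow> bil S f g = bil S g f"
proof -
  assume a: "transpose S = S"
  have e: "S $ i $ j = S $ j $ i" for i j
    using arg_cong[OF a, of "\<lambda>M. M $ j $ i"] by (simp add: transpose_def)
  show ?thesis unfolding bil_def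
    by (subst sum.swap) (simp add: e mult.commute mult.left_commute)
qed

lemma bil_lin_right: "transpose S = S \<Longrightarrow> bil S h (\<lambda>j. a * f j + b * g j) = a * bil S h f + b * bil S h g"
  by (subst (1 2 3) bil_sym[of S h]) (simp_all add: bil_lin_left)

lemma bil_pos: assumes "symmetric_pd S" "f \<noteq> (\<lambda>_. 0)" shows "bil S f f > 0"
proof -
  define x where "x = vec_lambda f"
  have "x \<noteq> 0" using assms(2) unfolding x_def by (metis vec_eq_iff vec_lambda_beta zero_index ext)
  then have "x \<bullet> (S *v x) > 0" using assms(1) unfolding symmetric_pd_def by blast
  also have "x \<bullet> (S *v x) = bil S f f"
    unfolding bil_def inner_vec_def matrix_vector_mult_def x_def
    by (simp add: sum_distrib_left algebra_simps)
  finally show ?thesis .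
qed

lemma dotv_lin: "dotv (\<lambda>j. a * f j + b * g j) m = a * dotv f m + b * dotv g m"
  unfolding dotv_def by (simp add: algebra_simps sum.distrib sum_distrib_left)

lemma comb_nonzero:
  assumes "wL \<noteq> (\<lambda>_. 0)" "wR \<noteq> (\<lambda>_. (0::real))" "\<forall>k. wL k = 0 \<or> wR k = 0" "t \<noteq> 0 \<or> u \<noteq> 0"
  shows "(\<lambda>j. t * wL j + u * wR j) \<noteq> (\<lambda>_. 0)"
proof
  assume h: "(\<lambda>j. t * wL j + u * wR j) = (\<lambda>_. 0)"
  obtain k1 where k1: "wL k1 \<noteq> 0" using assms(1) by auto
  obtain k2 where k2: "wR k2 \<noteq> 0" using assms(2) by auto
  have "t * wL k1 + u * wR k1 = 0" "t * wL k2 + u * wR k2 = 0" using h by (auto dest: fun_cong)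
  then show False using assms(3,4) k1 k2 by (metis add.right_neutral add_0 mult_eq_0_iff)
qed

lemma strict_cs:
  assumes pd: "symmetric_pd S" and "wL \<noteq> (\<lambda>_. 0)" "wR \<noteq> (\<lambda>_. (0::real))" "\<forall>k. wL k = 0 \<or> wR k = 0"
  shows "(bil S wL wR)^2 < bil S wL wL * bil S wR wR"
proof -
  have sym: "transpose S = S" using pd unfolding symmetric_pd_def by simp
  define c where "c = bil S wL wR"
  define vL where "vL = bil S wL wL"
  define vR where "vR = bil S wR wR"
  have vL: "vL > 0" unfolding vL_def using bil_pos pd assms(2) by blast
  have "bil S (\<lambda>j. c * wL j + (- vL) * wR j) (\<lambda>j. c * wL j + (- vL) * wR j) > 0"
    by (rule bil_pos[OF pd comb_nonzero[OF assms(2-4)]]) (use vL in auto)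
  also have "bil S (\<lambda>j. c * wL j + (- vL) * wR j) (\<lambda>j. c * wL j + (- vL) * wR j)
     = c * c * vL + c * (-vL) * c + (-vL) * c * c + vL * vL * vR"
    unfolding bil_lin_left bil_lin_right[OF sym] c_def vL_def vR_def
    using bil_sym[OF sym, of wR wL] by (simp add: algebra_simps)
  finally have "vL * (vL * vR - c^2) > 0" by (simp add: algebra_simps power2_eq_square)
  then show ?thesis using vL unfolding c_def vL_def vR_def
    by (simp add: zero_less_mult_iff)
qed

lemma quad_pos:
  fixes vL vR c g sL sR :: real
  assumes "vR > 0" "vL * vR - g^2 * c^2 > 0" "sL \<noteq> 0 \<or> sR \<noteq> 0"
  shows "vR * sL^2 - 2 * g * c * sL * sR + vL * sR^2 > 0"
proof -
  have e: "vR * (vR * sL^2 - 2 * g * c * sL * sR + vL * sR^2) = (vR * sL - g * c * sR)^2 + (vL * vR - g^2 * c^2) * sR^2"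
    by (simp add: algebra_simps power2_eq_square)
  have "(vR * sL - g * c * sR)^2 + (vL * vR - g^2 * c^2) * sR^2 > 0"
  proof (cases "sR = 0")
    case True then show ?thesis using assms by simp
  next
    case False then show ?thesis using assms(2)
      by (metis add_nonneg_pos zero_le_power2 zero_less_mult_iff zero_less_power2)
  qed
  then show ?thesis using e assms(1) by (metis zero_less_mult_pos)
qed

lemma node_step:
  assumes pd: "symmetric_pd S" and g: "0 \<le> \<gamma>" "\<gamma> \<le> 1"
    and nz: "wL \<noteq> (\<lambda>_. 0)" "wR \<noteq> (\<lambda>_. (0::real))" and dj: "\<forall>k. wL k = 0 \<or> wR k = 0"
    and s: "sL \<noteq> 0 \<or> sR \<noteq> 0"
    and ra: "raw_alphas S \<gamma> (wL, bil S wL wL, sL) (wR, bil S wR wR, sR) = (aL, aR)"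
  shows "\<bar>aL\<bar> + \<bar>aR\<bar> > 0"
    and "aL / (\<bar>aL\<bar> + \<bar>aR\<bar>) * sL + aR / (\<bar>aL\<bar> + \<bar>aR\<bar>) * sR > 0"
    and "(\<lambda>j. aL / (\<bar>aL\<bar> + \<bar>aR\<bar>) * wL j + aR / (\<bar>aL\<bar> + \<bar>aR\<bar>) * wR j) \<noteq> (\<lambda>_. 0)"
proof -
  define c where "c = bil S wL wR"
  define vL where "vL = bil S wL wL"
  define vR where "vR = bil S wR wR"
  define D where "D = vL * vR - \<gamma>^2 * c^2"
  have vR: "vR > 0" unfolding vR_def using bil_pos pd nz(2) by blast
  have cs: "c^2 < vL * vR" unfolding c_def vL_def vR_def by (rule strict_cs[OF pd nz dj])
  have "\<gamma>^2 \<le> 1" using g by (simp add: power_le_one)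
  then have "\<gamma>^2 * c^2 \<le> c^2" by (simp add: mult_left_le_one_le)
  then have D: "D > 0" unfolding D_def using cs by linarith
  have aL: "aL = (vR * sL - \<gamma> * c * sR) / D" and aR: "aR = (vL * sR - \<gamma> * c * sL) / D"
    using ra unfolding raw_alphas_def c_def vL_def vR_def D_def by (auto simp: Let_def)
  have "aL * sL + aR * sR = (vR * sL^2 - 2 * \<gamma> * c * sL * sR + vL * sR^2) / D"
    unfolding aL aR by (simp add: add_divide_distrib[symmetric] diff_divide_distrib[symmetric] times_divide_eq_left[symmetric] algebra_simps power2_eq_square)
  moreover have "vR * sL^2 - 2 * \<gamma> * c * sL * sR + vL * sR^2 > 0"
    by (rule quad_pos[OF vR _ s]) (use D D_def in simp)
  ultimately have N: "aL * sL + aR * sR > 0" using D by simp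
  then have ne: "aL \<noteq> 0 \<or> aR \<noteq> 0" by auto
  then show Z: "\<bar>aL\<bar> + \<bar>aR\<bar> > 0" by (cases "aL = 0") auto
  have "aL / (\<bar>aL\<bar> + \<bar>aR\<bar>) * sL + aR / (\<bar>aL\<bar> + \<bar>aR\<bar>) * sR = (aL * sL + aR * sR) / (\<bar>aL\<bar> + \<bar>aR\<bar>)"
    by (simp add: add_divide_distrib)
  then show "aL / (\<bar>aL\<bar> + \<bar>aR\<bar>) * sL + aR / (\<bar>aL\<bar> + \<bar>aR\<bar>) * sR > 0" using N Z by simp
  show "(\<lambda>j. aL / (\<bar>aL\<bar> + \<bar>aR\<bar>) * wL j + aR / (\<bar>aL\<bar> + \<bar>aR\<bar>) * wR j) \<noteq> (\<lambda>_. 0)"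
    by (rule comb_nonzero[OF nz dj]) (use ne Z in auto)
qed

lemma hrp_inv:
  assumes pd: "symmetric_pd S" and g: "0 \<le> \<gamma>" "\<gamma> \<le> 1" and mu: "\<forall>i. \<mu> $ i \<noteq> 0"
  shows "distinct (leaves t) \<Longrightarrow>
    fst (hrp S \<mu> \<gamma> t) \<noteq> (\<lambda>_. 0) \<and>
    (\<forall>k. k \<notin> set (leaves t) \<longrightarrow> fst (hrp S \<mu> \<gamma> t) k = 0) \<and>
    fst (snd (hrp S \<mu> \<gamma> t)) = bil S (fst (hrp S \<mu> \<gamma> t)) (fst (hrp S \<mu> \<gamma> t)) \<and>
    snd (snd (hrp S \<mu> \<gamma> t)) = dotv (fst (hrp S \<mu> \<gamma> t)) \<mu> \<and>
    snd (snd (hrp S \<mu> \<gamma> t)) \<noteq> 0 \<and>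
    (is_internal t \<longrightarrow> hrp_denominator S \<mu> \<gamma> t > 0)"
proof (induction t)
  case (Leaf i)
  have "(\<lambda>j. if j = i then 1 else (0::real)) \<noteq> (\<lambda>_. 0)" by (metis one_neq_zero)
  moreover have "S $ i $ i = bil S (\<lambda>j. if j = i then 1 else 0) (\<lambda>j. if j = i then 1 else 0)"
  proof -
    have "\<And>a b. (if a = i then 1 else 0) * S $ a $ b * (if b = i then 1 else 0) = (if a = i then (if b = i then S $ i $ i else 0) else (0::real))"
      by auto
    moreover have "\<And>a. (\<Sum>j\<in>UNIV. if a = i then (if j = i then S $ i $ i else 0) else (0::real)) = (if a = i then S $ i $ i else 0)"
      by (simp add: sum.delta)
    ultimately show ?thesis unfolding bil_def by (simp add: sum.delta)
  qed
  moreover have "\<mu> $ i = dotv (\<lambda>j. if j = i then 1 else 0) \<mu>" unfolding dotv_def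
  proof -
    have "\<And>a. (if a = i then 1 else 0) * \<mu> $ a = (if a = i then \<mu> $ i else 0)" by auto
    then show "\<mu> $ i = (\<Sum>a\<in>UNIV. (if a = i then 1 else 0) * \<mu> $ a)" by (simp add: sum.delta sum.delta')
  qed
  ultimately show ?case using mu by (simp del: One_nat_def) (metis)
next
  case (Node l r)
  have dl: "distinct (leaves l)" and dr: "distinct (leaves r)"
    and dis: "set (leaves l) \<inter> set (leaves r) = {}" using Node.prems by auto
  obtain wL vL sL where hl: "hrp S \<mu> \<gamma> l = (wL, vL, sL)" by (metis prod_cases3)
  obtain wR vR sR where hr: "hrp S \<mu> \<gamma> r = (wR, vR, sR)" by (metis prod_cases3)
  note IL = Node.IH(1)[OF dl, unfolded hl, simplified]
  note IR = Node.IH(2)[OF dr, unfolded hr, simplified]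
  have dj: "\<forall>k. wL k = 0 \<or> wR k = 0" using IL IR dis by blast
  obtain aL aR where ra: "raw_alphas S \<gamma> (wL, vL, sL) (wR, vR, sR) = (aL, aR)" by fastforce
  have ra': "raw_alphas S \<gamma> (wL, bil S wL wL, sL) (wR, bil S wR wR, sR) = (aL, aR)"
    using ra IL IR by simp
  have s: "sL \<noteq> 0 \<or> sR \<noteq> 0" using IL by simp
  note NS = node_step[OF pd g _ _ dj s ra'] 
  define Z where "Z = \<bar>aL\<bar> + \<bar>aR\<bar>"
  define w where "w = (\<lambda>j. aL / Z * wL j + aR / Z * wR j)"
  have h: "hrp S \<mu> \<gamma> (Node l r) = (w, bil S w w, dotv w \<mu>)"
    by (simp add: hl hr ra Let_def w_def Z_def)
  have den: "hrp_denominator S \<mu> \<gamma> (Node l r) = Z" by (simp add: hl hr ra Z_def)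
  have dw: "dotv w \<mu> = aL / Z * dotv wL \<mu> + aR / Z * dotv wR \<mu>" unfolding w_def by (rule dotv_lin)
  have sw: "dotv w \<mu> > 0" using dw NS(2) IL IR by (simp add: Z_def)
  have wnz: "w \<noteq> (\<lambda>_. 0)" using NS(3) IL IR by (simp add: w_def Z_def)
  have sup: "\<forall>k. k \<notin> set (leaves (Node l r)) \<longrightarrow> w k = 0" using IL IR by (simp add: w_def)
  show ?case unfolding h den using sw wnz sup NS(1) IL IR by (simp add: Z_def)
qed

lemma subtree_distinct: "t \<in> subtrees T \<Longrightarrow> distinct (leaves T) \<Longrightarrow> distinct (leaves t)"
  by (induction T) auto

lemma AE_nonzero: "AE \<mu> in lborel. \<forall>i. (\<mu>::real^'n::finite) $ i \<noteq> 0"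
proof (rule eventually_all_finite)
  fix i :: 'n
  have "{x::real^'n. x $ i = 0} \<in> null_sets lebesgue"
    using negligible_standard_hyperplane_cart[of i] by (simp add: negligible_iff_null_sets)
  then have "AE \<mu> in lebesgue. (\<mu>::real^'n) $ i \<noteq> 0"
    by (rule AE_I') auto
  then show "AE \<mu> in lborel. (\<mu>::real^'n) $ i \<noteq> 0"
    by (simp add: AE_completion_iff)
qed

theorem mainTheorem14:
  fixes S :: "real^'n::finite^'n" and T :: "'n btree" and \<gamma> :: real
  assumes "symmetric_pd S"
    and "valid_tree T"
    and "0 \<le> \<gamma>" and "\<gamma> \<le> 1"
  shows "AE \<mu> in lborel.
           \<forall>t\<in>subtrees T. is_internal t \<longrightarrow>
             hrp_signal S \<mu> \<gamma> t \<noteq> 0 \<and> hrp_denominator S \<mu> \<gamma> t > 0"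
  using AE_nonzero
proof (rule eventually_mono)
  fix \<mu> :: "real^'n" assume mu: "\<forall>i. \<mu> $ i \<noteq> 0"
  show "\<forall>t\<in>subtrees T. is_internal t \<longrightarrow>
             hrp_signal S \<mu> \<gamma> t \<noteq> 0 \<and> hrp_denominator S \<mu> \<gamma> t > 0"
  proof (intro ballI impI)
    fix t assume t: "t \<in> subtrees T" "is_internal t"
    have "distinct (leaves t)" using subtree_distinct t(1) assms(2) unfolding valid_tree_def by blast
    from hrp_inv[OF assms(1,3,4) mu this] t(2)
    show "hrp_signal S \<mu> \<gamma> t \<noteq> 0 \<and> hrp_denominator S \<mu> \<gamma> t > 0"
      unfolding hrp_signal_def by blast
  qed
qed

end
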